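(* The graph $K_{10}-3K_2$ has a triangular embedding in an orientable surface, and the octahedral graph $O_{10}$ has orientable genus $\lceil (4\cdot 2)/3\rceil = 3$.
   Context: $K_{10}-3K_2$ is $K_{10}$ with the 3 edges of a matching removed. $O_{10}$ is $K_{10}$ with the edges of a perfect matching removed. An embedding is triangular if it is cellular and every face is bounded by a closed walk of length 3. *)

theory Defs
  imports Complex_Main
begin

text \<open>Orientable (cellular) embeddings are described combinatorially by
  rotation systems (Heffter--Edmonds--Ringel): for each vertex v a cyclic permutation
  of its neighbours. Faces are the orbits of the face-tracing permutation on darts
  (u,v) \<mapsto> (v, \<rho> v u); the genus of the embedding is obtained from Euler's formula
  V - E + F = 2 - 2g (graphs considered here are connected).\<close>

definition simple_graph :: "'a set \<Rightarrow> 'a set set \<Rightarrow> bool" where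
  "simple_graph V E \<longleftrightarrow> finite V \<and> (\<forall>e\<in>E. e \<subseteq> V \<and> card e = 2)"

definition nbrs :: "'a set set \<Rightarrow> 'a \<Rightarrow> 'a set" where
  "nbrs E v = {u. {u, v} \<in> E \<and> u \<noteq> v}"

definition darts :: "'a set set \<Rightarrow> ('a \<times> 'a) set" where
  "darts E = {(u, v). {u, v} \<in> E \<and> u \<noteq> v}"

definition rotation_system :: "'a set \<Rightarrow> 'a set set \<Rightarrow> ('a \<Rightarrow> 'a \<Rightarrow> 'a) \<Rightarrow> bool" where
  "rotation_system V E \<rho> \<longleftrightarrow>
     (\<forall>v\<in>V. bij_betw (\<rho> v) (nbrs E v) (nbrs E v) \<and>
       (\<forall>u\<in>nbrs E v. \<forall>w\<in>nbrs E v. \<exists>k. (\<rho> v ^^ k) u = w))"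

definition face_step :: "('a \<Rightarrow> 'a \<Rightarrow> 'a) \<Rightarrow> 'a \<times> 'a \<Rightarrow> 'a \<times> 'a" where
  "face_step \<rho> d = (snd d, \<rho> (snd d) (fst d))"

definition face_orbit :: "('a \<Rightarrow> 'a \<Rightarrow> 'a) \<Rightarrow> 'a \<times> 'a \<Rightarrow> ('a \<times> 'a) set" where
  "face_orbit \<rho> d = {(face_step \<rho> ^^ k) d | k. True}"

definition faces :: "'a set set \<Rightarrow> ('a \<Rightarrow> 'a \<Rightarrow> 'a) \<Rightarrow> ('a \<times> 'a) set set" where
  "faces E \<rho> = face_orbit \<rho> ` darts E"

definition emb_genus :: "'a set \<Rightarrow> 'a set set \<Rightarrow> ('a \<Rightarrow> 'a \<Rightarrow> 'a) \<Rightarrow> nat" where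
  "emb_genus V E \<rho> =
     nat ((2 - int (card V) + int (card E) - int (card (faces E \<rho>))) div 2)"

definition has_triangular_orientable_embedding :: "'a set \<Rightarrow> 'a set set \<Rightarrow> bool" where
  "has_triangular_orientable_embedding V E \<longleftrightarrow>
     (\<exists>\<rho>. rotation_system V E \<rho> \<and> (\<forall>f\<in>faces E \<rho>. card f = 3))"

definition orientable_genus :: "'a set \<Rightarrow> 'a set set \<Rightarrow> nat" where
  "orientable_genus V E = (LEAST g. \<exists>\<rho>. rotation_system V E \<rho> \<and> emb_genus V E \<rho> = g)"

definition K_edges :: "nat \<Rightarrow> nat set set" where
  "K_edges n = {{u, v} | u v. u < n \<and> v < n \<and> u \<noteq> v}"

definition K10_minus_3K2_edges :: "nat set set" where
  "K10_minus_3K2_edges = K_edges 10 - {{0,1},{2,3},{4,5}}"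

definition O10_edges :: "nat set set" where
  "O10_edges = K_edges 10 - {{0,1},{2,3},{4,5},{6,7},{8,9}}"

end

theory Submission
  imports Defs
begin


definition nxt :: "'a list \<Rightarrow> 'a \<Rightarrow> 'a" where
  "nxt xs u = (case map_of (zip xs (rotate1 xs)) u of Some w \<Rightarrow> w | None \<Rightarrow> u)"

lemma nxt_nth:
  assumes "distinct xs" "i < length xs"
  shows "nxt xs (xs!i) = xs!(Suc i mod length xs)"
  using map_of_zip_nth[of xs "rotate1 xs" i] assms by (simp add: nxt_def nth_rotate1)

lemma nxt_pow:
  assumes "distinct xs" "i < length xs"
  shows "(nxt xs ^^ k) (xs!i) = xs!((i+k) mod length xs)"
proof (induction k)
  case 0 then show ?case using assms by simp
next
  case (Suc k)
  have "length xs > 0" using assms by auto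
  then have "(i+k) mod length xs < length xs" by simp
  then show ?case using Suc nxt_nth[OF assms(1)] by (simp add: mod_Suc_eq)
qed

lemma nxt_ok:
  assumes "distinct xs"
  shows "bij_betw (nxt xs) (set xs) (set xs) \<and> (\<forall>u\<in>set xs. \<forall>w\<in>set xs. \<exists>k. (nxt xs ^^ k) u = w)"
proof -
  let ?n = "length xs"
  have cyc: "\<forall>u\<in>set xs. \<forall>w\<in>set xs. \<exists>k. (nxt xs ^^ k) u = w"
  proof (intro ballI)
    fix u w assume "u \<in> set xs" "w \<in> set xs"
    then obtain i j where ij: "i < ?n" "j < ?n" "u = xs!i" "w = xs!j" by (metis in_set_conv_nth)
    have "(nxt xs ^^ (j + ?n - i)) u = xs!((i + (j + ?n - i)) mod ?n)"
      using nxt_pow[OF assms ij(1)] ij by simp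
    also have "(i + (j + ?n - i)) mod ?n = j" using ij by simp
    finally show "\<exists>k. (nxt xs ^^ k) u = w" using ij by blast
  qed
  have maps: "nxt xs ` set xs \<subseteq> set xs"
  proof
    fix y assume "y \<in> nxt xs ` set xs"
    then obtain i where "i < ?n" "y = nxt xs (xs!i)" by (metis imageE in_set_conv_nth)
    moreover have "Suc i mod ?n < ?n" using \<open>i < ?n\<close> by (intro mod_less_divisor) linarith
    ultimately show "y \<in> set xs" using nxt_nth[OF assms] by (metis nth_mem)
  qed
  have onto: "set xs \<subseteq> nxt xs ` set xs"
  proof
    fix w assume "w \<in> set xs"
    then obtain j where j: "j < ?n" "w = xs!j" by (metis in_set_conv_nth)
    have "(Suc ((j + ?n - 1) mod ?n)) mod ?n = j"
      using j by (cases j) (auto simp: mod_Suc_eq)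
    moreover have lt: "(j + ?n - 1) mod ?n < ?n" using j by (intro mod_less_divisor) linarith
    ultimately have "nxt xs (xs!((j + ?n - 1) mod ?n)) = w"
      using nxt_nth[OF assms, of "(j + ?n - 1) mod ?n"] j by auto
    moreover have "xs!((j + ?n - 1) mod ?n) \<in> set xs" using lt by (rule nth_mem)
    ultimately show "w \<in> nxt xs ` set xs" by blast
  qed
  have "nxt xs ` set xs = set xs" using maps onto by blast
  then have "bij_betw (nxt xs) (set xs) (set xs)"
    by (simp add: bij_betw_def eq_card_imp_inj_on)
  then show ?thesis using cyc by blast
qed

lemma rotation_systemI:
  assumes "\<And>v. v \<in> V \<Longrightarrow> distinct (R v) \<and> nbrs E v = set (R v)"
  shows "rotation_system V E (\<lambda>v. nxt (R v))"
  unfolding rotation_system_def using assms nxt_ok by metis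

lemma orbit3:
  assumes "face_step \<rho> (face_step \<rho> (face_step \<rho> d)) = d"
  shows "face_orbit \<rho> d = {d, face_step \<rho> d, face_step \<rho> (face_step \<rho> d)}"
proof -
  let ?S = "{d, face_step \<rho> d, face_step \<rho> (face_step \<rho> d)}"
  have "(face_step \<rho> ^^ k) d \<in> ?S" for k
    by (induction k) (use assms in auto)
  moreover have "x \<in> ?S \<Longrightarrow> \<exists>k. x = (face_step \<rho> ^^ k) d" for x
    by (auto intro: exI[of _ 0] exI[of _ 1] exI[of _ 2] simp: numeral_2_eq_2)
  ultimately show ?thesis unfolding face_orbit_def by blast
qed

lemma orbit4:
  assumes "face_step \<rho> (face_step \<rho> (face_step \<rho> (face_step \<rho> d))) = d"
  shows "face_orbit \<rho> d = {d, face_step \<rho> d, face_step \<rho> (face_step \<rho> d), face_step \<rho> (face_step \<rho> (face_step \<rho> d))}"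
proof -
  let ?S = "{d, face_step \<rho> d, face_step \<rho> (face_step \<rho> d), face_step \<rho> (face_step \<rho> (face_step \<rho> d))}"
  have "(face_step \<rho> ^^ k) d \<in> ?S" for k
    by (induction k) (use assms in auto)
  moreover have "x \<in> ?S \<Longrightarrow> \<exists>k. x = (face_step \<rho> ^^ k) d" for x
    by (auto intro: exI[of _ 0] exI[of _ 1] exI[of _ 2] exI[of _ 3] simp: numeral_2_eq_2 numeral_3_eq_3)
  ultimately show ?thesis unfolding face_orbit_def by blast
qed



fun iterf :: "('a \<Rightarrow> 'a) \<Rightarrow> 'a \<Rightarrow> nat \<Rightarrow> 'a" where
  "iterf s d 0 = d"
| "iterf s d (Suc n) = iterf s (s d) n"

fun iterl :: "('a \<Rightarrow> 'a) \<Rightarrow> 'a \<Rightarrow> nat \<Rightarrow> 'a list" where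
  "iterl s d 0 = []"
| "iterl s d (Suc n) = d # iterl s (s d) n"

lemma iterf_eq: "iterf s d n = (s ^^ n) d"
  by (induction n arbitrary: d) (simp_all add: funpow_swap1)

lemma iterl_eq: "set (iterl s d n) = {(s ^^ k) d | k. k < n}"
proof (induction n arbitrary: d)
  case 0 then show ?case by simp
next
  case (Suc n)
  have "{(s ^^ k) d | k. k < Suc n} = insert d {(s ^^ k) (s d) | k. k < n}"
  proof (intro set_eqI iffI)
    fix x assume "x \<in> {(s ^^ k) d | k. k < Suc n}"
    then obtain k where k: "k < Suc n" "x = (s ^^ k) d" by blast
    show "x \<in> insert d {(s ^^ k) (s d) | k. k < n}"
    proof (cases k)
      case 0 then show ?thesis using k by simp
    next
      case (Suc k')
      then have "x = (s ^^ k') (s d)" "k' < n" using k by (simp_all add: funpow_swap1)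
      then show ?thesis by blast
    qed
  next
    fix x assume "x \<in> insert d {(s ^^ k) (s d) | k. k < n}"
    then show "x \<in> {(s ^^ k) d | k. k < Suc n}"
    proof
      assume "x = d" then show ?thesis by (auto intro: exI[of _ 0])
    next
      assume "x \<in> {(s ^^ k) (s d) | k. k < n}"
      then obtain k where "k < n" "x = (s ^^ k) (s d)" by blast
      then show ?thesis by (auto intro!: exI[of _ "Suc k"] simp: funpow_swap1)
    qed
  qed
  then show ?case using Suc by simp
qed

lemma orbit_n:
  assumes "n > 0" "iterf (face_step \<rho>) d n = d"
  shows "face_orbit \<rho> d = set (iterl (face_step \<rho>) d n)"
proof -
  let ?s = "face_step \<rho>"
  have p: "(?s ^^ n) d = d" using assms iterf_eq by metis
  have "{(?s ^^ k) d | k. True} = {(?s ^^ k) d | k. k < n}"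
  proof (intro set_eqI iffI)
    fix x assume "x \<in> {(?s ^^ k) d | k. True}"
    then obtain k where "x = (?s ^^ k) d" by blast
    then have "x = (?s ^^ (k mod n)) d" using funpow_mod_eq[where f="?s" and n=n and x=d and m=k] p by simp
    moreover have "k mod n < n" using assms by simp
    ultimately show "x \<in> {(?s ^^ k) d | k. k < n}" by blast
  qed blast
  then show ?thesis unfolding face_orbit_def iterl_eq by simp
qed

section \<open>General facts about face tracing\<close>

context
  fixes V :: "'a set" and E :: "'a set set" and \<rho> :: "'a \<Rightarrow> 'a \<Rightarrow> 'a"
  assumes rs: "rotation_system V E \<rho>"
    and dV: "\<And>u v. (u, v) \<in> darts E \<Longrightarrow> v \<in> V"
    and fin: "finite (darts E)"
begin

lemma dart_nbrs: "(u, v) \<in> darts E \<longleftrightarrow> u \<in> nbrs E v"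
  unfolding darts_def nbrs_def by auto

lemma step_in: "d \<in> darts E \<Longrightarrow> face_step \<rho> d \<in> darts E"
proof -
  assume d: "d \<in> darts E"
  obtain u v where uv: "d = (u, v)" by (cases d)
  have v: "v \<in> V" using dV d uv by blast
  have "u \<in> nbrs E v" using d uv dart_nbrs by simp
  then have "\<rho> v u \<in> nbrs E v" using rs v unfolding rotation_system_def bij_betw_def by blast
  then have "{\<rho> v u, v} \<in> E \<and> \<rho> v u \<noteq> v" unfolding nbrs_def by simp
  then show ?thesis unfolding uv face_step_def darts_def by (auto simp: insert_commute)
qed

lemma step_inj: "inj_on (face_step \<rho>) (darts E)"
proof (rule inj_onI)
  fix d e assume d: "d \<in> darts E" and e: "e \<in> darts E" and eq: "face_step \<rho> d = face_step \<rho> e"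
  obtain u v where uv: "d = (u, v)" by (cases d)
  obtain u' v' where uv': "e = (u', v')" by (cases e)
  have vv: "v = v'" and r: "\<rho> v u = \<rho> v u'" using eq uv uv' unfolding face_step_def by auto
  have v: "v \<in> V" using dV d uv by blast
  have "u \<in> nbrs E v" "u' \<in> nbrs E v" using d e uv uv' vv dart_nbrs by auto
  then have "u = u'" using r rs v unfolding rotation_system_def bij_betw_def inj_on_def by blast
  then show "d = e" using uv uv' vv by simp
qed

lemma pow_in: "d \<in> darts E \<Longrightarrow> (face_step \<rho> ^^ k) d \<in> darts E"
  by (induction k) (auto intro: step_in)

lemma pow_cancel: "x \<in> darts E \<Longrightarrow> y \<in> darts E \<Longrightarrow> (face_step \<rho> ^^ i) x = (face_step \<rho> ^^ i) y \<Longrightarrow> x = y"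
proof (induction i arbitrary: x y)
  case 0 then show ?case by simp
next
  case (Suc i)
  have "face_step \<rho> x = face_step \<rho> y"
    using Suc.IH[of "face_step \<rho> x" "face_step \<rho> y"] Suc.prems step_in
    by (simp add: funpow_swap1)
  then show ?case using step_inj Suc.prems unfolding inj_on_def by blast
qed

lemma period: "d \<in> darts E \<Longrightarrow> \<exists>n>0. (face_step \<rho> ^^ n) d = d"
proof -
  assume d: "d \<in> darts E"
  let ?f = "\<lambda>k. (face_step \<rho> ^^ k) d"
  have "?f ` {0..card (darts E)} \<subseteq> darts E" using pow_in[OF d] by blast
  then have "card (?f ` {0..card (darts E)}) \<le> card (darts E)" using fin card_mono by blast
  have ni: "\<not> inj_on ?f {0..card (darts E)}"
  proof
    assume "inj_on ?f {0..card (darts E)}"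
    then have "card (?f ` {0..card (darts E)}) = Suc (card (darts E))" by (simp add: card_image)
    then show False using \<open>card (?f ` {0..card (darts E)}) \<le> card (darts E)\<close> by simp
  qed
  then obtain i j where ij: "i \<noteq> j" "?f i = ?f j" unfolding inj_on_def by blast
  have main: "\<exists>n>0. (face_step \<rho> ^^ n) d = d" if "i < j" "?f i = ?f j" for i j
  proof -
    have "?f j = (face_step \<rho> ^^ (i + (j - i))) d" using \<open>i < j\<close> by simp
    also have "\<dots> = (face_step \<rho> ^^ i) ((face_step \<rho> ^^ (j - i)) d)" by (simp add: funpow_add)
    finally have "(face_step \<rho> ^^ i) ((face_step \<rho> ^^ (j - i)) d) = (face_step \<rho> ^^ i) d"
      using that(2) by simp
    then have "(face_step \<rho> ^^ (j - i)) d = d" using pow_cancel pow_in d by blast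
    then show ?thesis using \<open>i < j\<close> by (intro exI[of _ "j - i"]) simp
  qed
  show ?thesis
  proof (cases "i < j")
    case True then show ?thesis using main ij by blast
  next
    case False then have "j < i" using ij by simp
    then show ?thesis using main[of j i] ij by simp
  qed
qed

lemma orbit_same:
  assumes d: "d \<in> darts E" and x: "x \<in> face_orbit \<rho> d"
  shows "face_orbit \<rho> x = face_orbit \<rho> d"
proof -
  let ?s = "face_step \<rho>"
  obtain k where k: "x = (?s ^^ k) d" using x unfolding face_orbit_def by blast
  obtain n where n: "n > 0" "(?s ^^ n) d = d" using period d by blast
  have per: "(?s ^^ (n * q)) d = d" for q
  proof (induction q)
    case 0 then show ?case by simp
  next
    case (Suc q)
    have "(?s ^^ (n * Suc q)) d = (?s ^^ n) ((?s ^^ (n * q)) d)"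
      by (simp add: funpow_add)
    then show ?case using Suc n by simp
  qed
  show ?thesis
  proof (intro set_eqI iffI)
    fix y assume "y \<in> face_orbit \<rho> x"
    then obtain m where "y = (?s ^^ m) x" unfolding face_orbit_def by blast
    then have "y = (?s ^^ (m + k)) d" using k by (simp add: funpow_add)
    then show "y \<in> face_orbit \<rho> d" unfolding face_orbit_def by blast
  next
    fix y assume "y \<in> face_orbit \<rho> d"
    then obtain m where m: "y = (?s ^^ m) d" unfolding face_orbit_def by blast
    have kk: "k \<le> n * k" using n by simp
    have "(?s ^^ (n * k - k + m)) x = (?s ^^ (n * k - k + m + k)) d"
      using k by (simp add: funpow_add)
    also have "n * k - k + m + k = m + n * k" using kk by linarith
    also have "(?s ^^ (m + n * k)) d = y" using m per by (simp add: funpow_add)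
    finally show "y \<in> face_orbit \<rho> x" unfolding face_orbit_def by blast
  qed
qed

lemma self_orbit: "d \<in> face_orbit \<rho> d"
  unfolding face_orbit_def by (auto intro: exI[of _ 0])

lemma orbit_sub: "d \<in> darts E \<Longrightarrow> face_orbit \<rho> d \<subseteq> darts E"
  unfolding face_orbit_def using pow_in by blast

lemma faces_disjoint: "pairwise disjnt (faces E \<rho>)"
proof (intro pairwiseI)
  fix f g assume f: "f \<in> faces E \<rho>" and g: "g \<in> faces E \<rho>" and ne: "f \<noteq> g"
  obtain a where a: "a \<in> darts E" "f = face_orbit \<rho> a" using f unfolding faces_def by blast
  obtain b where b: "b \<in> darts E" "g = face_orbit \<rho> b" using g unfolding faces_def by blast
  show "disjnt f g" unfolding disjnt_def
  proof (rule ccontr)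
    assume "f \<inter> g \<noteq> {}"
    then obtain x where "x \<in> face_orbit \<rho> a" "x \<in> face_orbit \<rho> b" using a b by blast
    then show False using orbit_same[OF a(1)] orbit_same[OF b(1)] a b ne by metis
  qed
qed

lemma faces_count:
  assumes big: "\<And>f. f \<in> faces E \<rho> \<Longrightarrow> card f \<ge> 3"
  shows "3 * card (faces E \<rho>) \<le> card (darts E)"
proof -
  have fins: "\<And>f. f \<in> faces E \<rho> \<Longrightarrow> finite f"
    unfolding faces_def using orbit_sub fin finite_subset by blast
  have ffin: "finite (faces E \<rho>)" unfolding faces_def using fin by simp
  have "3 * card (faces E \<rho>) = (\<Sum>f\<in>faces E \<rho>. 3)" by simp
  also have "\<dots> \<le> (\<Sum>f\<in>faces E \<rho>. card f)" using big by (intro sum_mono) auto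
  also have "\<dots> = card (\<Union>(faces E \<rho>))"
    using card_Union_disjoint[OF faces_disjoint fins] by simp
  also have "\<dots> \<le> card (darts E)"
    using fin orbit_sub unfolding faces_def by (intro card_mono) auto
  finally show ?thesis .
qed

lemma orbit_card3:
  assumes deg: "\<And>v u. v \<in> V \<Longrightarrow> u \<in> nbrs E v \<Longrightarrow> \<exists>w\<in>nbrs E v. w \<noteq> u"
    and d: "d \<in> darts E"
  shows "card (face_orbit \<rho> d) \<ge> 3"
proof -
  let ?s = "face_step \<rho>"
  obtain u v where uv: "d = (u, v)" by (cases d)
  have v: "v \<in> V" using dV d uv by blast
  have u: "u \<in> nbrs E v" using d uv dart_nbrs by simp
  have uv_ne: "u \<noteq> v" using d uv unfolding darts_def by simp
  have n1: "d \<noteq> ?s d" using uv uv_ne unfolding face_step_def by auto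
  have n2: "d \<noteq> ?s (?s d)"
  proof
    assume eq: "d = ?s (?s d)"
    then have fx: "\<rho> v u = u" using uv unfolding face_step_def by simp
    have "(\<rho> v ^^ k) u = u" for k by (induction k) (use fx in auto)
    moreover obtain w where "w \<in> nbrs E v" "w \<noteq> u" using deg v u by blast
    moreover have "\<forall>w\<in>nbrs E v. \<exists>k. (\<rho> v ^^ k) u = w"
      using rs v u unfolding rotation_system_def by blast
    ultimately show False by metis
  qed
  have n3: "?s d \<noteq> ?s (?s d)" using n1 step_inj step_in d unfolding inj_on_def by metis
  have sub: "{d, ?s d, ?s (?s d)} \<subseteq> face_orbit \<rho> d"
    unfolding face_orbit_def
    by (auto intro: exI[of _ 0] exI[of _ 1] exI[of _ 2] simp: numeral_2_eq_2)
  have "finite (face_orbit \<rho> d)" using orbit_sub d fin finite_subset by blast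
  then have "card {d, ?s d, ?s (?s d)} \<le> card (face_orbit \<rho> d)" using sub card_mono by blast
  then show ?thesis using n1 n2 n3 by simp
qed

end



lemma m3: "u \<noteq> v \<Longrightarrow> ({u,v} \<in> {{0,1},{2,3},{4,5::nat}}) \<longleftrightarrow> (u div 2 = v div 2 \<and> u < 6)"
proof
  assume "u \<noteq> v" "{u,v} \<in> {{0,1},{2,3},{4,5::nat}}" then show "u div 2 = v div 2 \<and> u < 6"
    by (auto simp: doubleton_eq_iff)
next
  assume "u \<noteq> v" "u div 2 = v div 2 \<and> u < 6"
  then have "(u = 0 \<and> v = 1) \<or> (u = 1 \<and> v = 0) \<or> (u = 2 \<and> v = 3) \<or> (u = 3 \<and> v = 2) \<or> (u = 4 \<and> v = 5) \<or> (u = 5 \<and> v = 4)"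
    by presburger
  then show "{u,v} \<in> {{0,1},{2,3},{4,5::nat}}" by auto
qed

lemma m5: "u \<noteq> v \<Longrightarrow> ({u,v} \<in> {{0,1},{2,3},{4,5},{6,7},{8,9::nat}}) \<longleftrightarrow> (u div 2 = v div 2 \<and> u < 10)"
proof
  assume "u \<noteq> v" "{u,v} \<in> {{0,1},{2,3},{4,5},{6,7},{8,9::nat}}" then show "u div 2 = v div 2 \<and> u < 10"
    by (auto simp: doubleton_eq_iff)
next
  assume "u \<noteq> v" "u div 2 = v div 2 \<and> u < 10"
  then have "(u = 0 \<and> v = 1) \<or> (u = 1 \<and> v = 0) \<or> (u = 2 \<and> v = 3) \<or> (u = 3 \<and> v = 2) \<or> (u = 4 \<and> v = 5) \<or> (u = 5 \<and> v = 4)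
    \<or> (u = 6 \<and> v = 7) \<or> (u = 7 \<and> v = 6) \<or> (u = 8 \<and> v = 9) \<or> (u = 9 \<and> v = 8)"
    by presburger
  then show "{u,v} \<in> {{0,1},{2,3},{4,5},{6,7},{8,9::nat}}" by auto
qed

lemma K_edges_mem: "{u, v} \<in> K_edges n \<longleftrightarrow> u < n \<and> v < n \<and> u \<noteq> v"
  unfolding K_edges_def by (auto simp: doubleton_eq_iff)

lemma K_edges_elem: "e \<in> K_edges n \<Longrightarrow> \<exists>u v. e = {u,v} \<and> u < n \<and> v < n \<and> u \<noteq> v"
  unfolding K_edges_def by auto

lemma nbrs_K: "nbrs (K_edges n - M) v = {u. u < n \<and> v < n \<and> u \<noteq> v \<and> {u,v} \<notin> M}"
  unfolding nbrs_def using K_edges_mem by blast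

lemma darts_nbrs: "(u, v) \<in> darts E \<longleftrightarrow> u \<in> nbrs E v"
  unfolding darts_def nbrs_def by auto

lemma simple_K: "simple_graph {0..<n} (K_edges n - M)"
proof -
  have "\<forall>e\<in>K_edges n - M. e \<subseteq> {0..<n} \<and> card e = 2"
  proof
    fix e assume "e \<in> K_edges n - M"
    then obtain u v where "e = {u,v}" "u < n" "v < n" "u \<noteq> v" using K_edges_elem by blast
    then show "e \<subseteq> {0..<n} \<and> card e = 2" by auto
  qed
  then show ?thesis unfolding simple_graph_def by simp
qed

lemma lt10: "(v::nat) < 10 \<Longrightarrow> v = 0 \<or> v = 1 \<or> v = 2 \<or> v = 3 \<or> v = 4 \<or> v = 5 \<or> v = 6 \<or> v = 7 \<or> v = 8 \<or> v = 9"
  by auto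

section \<open>O10\<close>

definition R2 :: "nat \<Rightarrow> nat list" where
  "R2 v = [[6, 2, 7, 8, 4, 3, 9, 5],[4, 2, 9, 8, 6, 5, 3, 7],[0, 6, 9, 1, 4, 8, 5, 7],[0, 4, 6, 7, 1, 5, 8, 9],[3, 0, 8, 2, 1, 7, 9, 6],[0, 9, 7, 2, 8, 3, 1, 6],[2, 0, 5, 1, 8, 3, 4, 9],[0, 2, 5, 9, 4, 1, 3, 8],[4, 0, 7, 6, 1, 3, 5, 2],[5, 0, 3, 1, 2, 6, 4, 7]] ! v"

lemma R2_ok: "v < 10 \<Longrightarrow> distinct (R2 v) \<and> (\<forall>u. (u < 10 \<and> u \<noteq> v \<and> \<not> (u div 2 = v div 2 \<and> u < 10)) \<longleftrightarrow> u \<in> set (R2 v))"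
  apply (drule lt10)
  apply (elim disjE; simp add: R2_def; presburger)
  done

lemma nbrs2: "v < 10 \<Longrightarrow> nbrs O10_edges v = set (R2 v)"
proof (rule set_eqI)
  fix u assume v: "v < 10"
  have "u \<in> nbrs O10_edges v \<longleftrightarrow> u < 10 \<and> v < 10 \<and> u \<noteq> v \<and> {u,v} \<notin> {{0,1},{2,3},{4,5},{6,7},{8,9}}"
    unfolding O10_edges_def nbrs_K mem_Collect_eq by (rule refl)
  also have "\<dots> \<longleftrightarrow> u < 10 \<and> u \<noteq> v \<and> \<not> (u div 2 = v div 2 \<and> u < 10)"
  proof (cases "u = v")
    case True then show ?thesis by simp
  next
    case False then show ?thesis unfolding m5[OF False] using v by blast
  qed
  also have "\<dots> \<longleftrightarrow> u \<in> set (R2 v)" using conjunct2[OF R2_ok[OF v]] by (rule spec)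
  finally show "u \<in> nbrs O10_edges v \<longleftrightarrow> u \<in> set (R2 v)" .
qed

lemma darts2: "(u, v) \<in> darts O10_edges \<longleftrightarrow> v < 10 \<and> u \<in> set (R2 v)"
proof -
  have vlt: "(u, v) \<in> darts O10_edges \<Longrightarrow> v < 10"
  proof -
    assume "(u, v) \<in> darts O10_edges"
    then have "{u, v} \<in> K_edges 10" unfolding darts_def O10_edges_def by blast
    then show "v < 10" using K_edges_mem by blast
  qed
  show ?thesis
  proof (cases "v < 10")
    case True then show ?thesis using darts_nbrs[of u v] nbrs2[OF True] by simp
  next
    case False then show ?thesis using vlt by blast
  qed
qed

lemma rs2: "rotation_system {0..<10} O10_edges (\<lambda>v. nxt (R2 v))"
proof (rule rotation_systemI)
  fix v :: nat assume "v \<in> {0..<10}"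
  then have "v < 10" by simp
  then show "distinct (R2 v) \<and> nbrs O10_edges v = set (R2 v)" using conjunct1[OF R2_ok[OF \<open>v < 10\<close>]] nbrs2[OF \<open>v < 10\<close>] by simp
qed

definition dlist2 :: "(nat \<times> nat) list" where
  "dlist2 = concat (map (\<lambda>v. map (\<lambda>u. (u, v)) (R2 v)) [0,1,2,3,4,5,6,7,8,9])"

lemma darts2_sub: "darts O10_edges \<subseteq> set dlist2"
proof
  fix d assume "d \<in> darts O10_edges"
  then obtain u v where uv: "d = (u, v)" "v < 10" "u \<in> set (R2 v)" using darts2 by (cases d) auto
  then have "v \<in> set [0,1,2,3,4,5,6,7,8,9]" using lt10[OF uv(2)] by auto
  then show "d \<in> set dlist2" unfolding dlist2_def using uv by auto
qed

lemma len_dlist2: "length dlist2 = 80"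
  by (simp add: dlist2_def R2_def)

lemma darts2_card: "card (darts O10_edges) \<le> 80"
proof -
  have "card (darts O10_edges) \<le> card (set dlist2)" using darts2_sub by (intro card_mono) auto
  also have "\<dots> \<le> length dlist2" by (rule card_length)
  finally show ?thesis using len_dlist2 by simp
qed

lemma darts2_fin: "finite (darts O10_edges)"
  using darts2_sub finite_subset by blast

lemma deg2: "v \<in> {0..<10} \<Longrightarrow> u \<in> nbrs O10_edges v \<Longrightarrow> \<exists>w\<in>nbrs O10_edges v. w \<noteq> u"
proof -
  assume v: "v \<in> {0..<10}" and u: "u \<in> nbrs O10_edges v"
  have "v < 10" using v by simp
  then have "\<exists>w\<in>set (R2 v). w \<noteq> u"
    apply (drule_tac lt10)
    apply (elim disjE; auto simp add: R2_def)
    done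
  then show ?thesis using nbrs2 \<open>v < 10\<close> by simp
qed

lemma O10_card_E: "card O10_edges = 40"
proof -
  let ?P = "{(u, v). u < v \<and> v < (10::nat) \<and> u div 2 \<noteq> v div 2}"
  let ?g = "\<lambda>(u::nat, v). {u, v}"
  have img: "O10_edges = ?g ` ?P"
  proof (intro set_eqI iffI)
    fix e assume e: "e \<in> O10_edges"
    have eK: "e \<in> K_edges 10" using DiffD1[OF e[unfolded O10_edges_def]] .
    have eM: "e \<notin> {{0,1},{2,3},{4,5},{6,7},{8,9}}" using conjunct2[OF iffD1[OF Diff_iff e[unfolded O10_edges_def]]] .
    obtain u v where uv: "e = {u,v}" "u < 10" "v < 10" "u \<noteq> v"
      using K_edges_elem[OF eK] by blast
    have "{u,v} \<notin> {{0,1},{2,3},{4,5},{6,7},{8,9}}" using eM uv(1) by simp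
    then have "\<not> (u div 2 = v div 2 \<and> u < 10)" unfolding m5[OF uv(4)] .
    then have nd: "u div 2 \<noteq> v div 2" using uv by simp
    show "e \<in> ?g ` ?P"
    proof (cases "u < v")
      case True
      then have "(u, v) \<in> ?P" using uv nd by simp
      moreover have "e = ?g (u, v)" using uv(1) by simp
      ultimately show ?thesis by (rule rev_image_eqI)
    next
      case False then have "v < u" using uv by simp
      then have "(v, u) \<in> ?P" using uv nd by simp
      moreover have "e = ?g (v, u)" using uv(1) by (simp add: insert_commute)
      ultimately show ?thesis by (rule rev_image_eqI)
    qed
  next
    fix e assume "e \<in> ?g ` ?P"
    then obtain u v where uv: "e = {u,v}" "u < v" "v < 10" "u div 2 \<noteq> v div 2" by auto
    have "u \<noteq> v" using uv by simp
    have k: "{u,v} \<in> K_edges 10" using K_edges_mem uv by simp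
    have "\<not> (u div 2 = v div 2 \<and> u < 10)" using uv by simp
    then have m: "{u,v} \<notin> {{0,1},{2,3},{4,5},{6,7},{8,9}}" unfolding m5[OF \<open>u \<noteq> v\<close>] .
    from k m have "{u,v} \<in> K_edges 10 - {{0,1},{2,3},{4,5},{6,7},{8,9}}" by (rule DiffI)
    then show "e \<in> O10_edges" unfolding O10_edges_def uv(1) .
  qed
  have inj: "inj_on ?g ?P"
    by (rule inj_onI) (auto simp: doubleton_eq_iff)
  define pl :: "(nat \<times> nat) list" where "pl = [(0,2), (1,2), (0,3), (1,3), (0,4), (1,4), (2,4), (3,4), (0,5), (1,5), (2,5), (3,5), (0,6), (1,6), (2,6), (3,6), (4,6), (5,6), (0,7), (1,7), (2,7), (3,7), (4,7), (5,7), (0,8), (1,8), (2,8), (3,8), (4,8), (5,8), (6,8), (7,8), (0,9), (1,9), (2,9), (3,9), (4,9), (5,9), (6,9), (7,9)]"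
  have "?P = set pl"
  proof (intro set_eqI iffI)
    fix x assume "x \<in> ?P"
    then obtain u v where uv: "x = (u, v)" "u < v" "v < 10" "u div 2 \<noteq> v div 2" by blast
    then have "u < 10" by simp
    then show "x \<in> set pl" using uv unfolding pl_def
      apply (drule_tac lt10)
      apply (insert lt10[OF uv(3)])
      apply (elim disjE; simp)
      done
  next
    fix x assume "x \<in> set pl" then show "x \<in> ?P" unfolding pl_def by auto
  qed
  moreover have "distinct pl" "length pl = 40" unfolding pl_def by simp_all
  ultimately have "card ?P = 40" using distinct_card by metis
  moreover have "card (?g ` ?P) = card ?P" by (rule card_image[OF inj])
  ultimately show ?thesis using img by simp
qed

section \<open>K10 - 3K2\<close>

definition R1 :: "nat \<Rightarrow> nat list" where
  "R1 v = [[6, 2, 7, 8, 4, 3, 9, 5],[4, 2, 9, 8, 6, 5, 3, 7],[0, 6, 9, 1, 4, 8, 5, 7],[0, 4, 6, 7, 1, 5, 8, 9],[3, 0, 8, 2, 1, 7, 9, 6],[0, 9, 7, 2, 8, 3, 1, 6],[2, 0, 5, 1, 8, 7, 3, 4, 9],[0, 2, 5, 9, 4, 1, 3, 6, 8],[4, 0, 7, 6, 1, 9, 3, 5, 2],[5, 0, 3, 8, 1, 2, 6, 4, 7]] ! v"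

lemma R1_ok: "v < 10 \<Longrightarrow> distinct (R1 v) \<and> (\<forall>u. (u < 10 \<and> u \<noteq> v \<and> \<not> (u div 2 = v div 2 \<and> u < 6)) \<longleftrightarrow> u \<in> set (R1 v))"
  apply (drule lt10)
  apply (elim disjE; simp add: R1_def; presburger)
  done

lemma nbrs1: "v < 10 \<Longrightarrow> nbrs K10_minus_3K2_edges v = set (R1 v)"
proof (rule set_eqI)
  fix u assume v: "v < 10"
  have "u \<in> nbrs K10_minus_3K2_edges v \<longleftrightarrow> u < 10 \<and> v < 10 \<and> u \<noteq> v \<and> {u,v} \<notin> {{0,1},{2,3},{4,5}}"
    unfolding K10_minus_3K2_edges_def nbrs_K mem_Collect_eq by (rule refl)
  also have "\<dots> \<longleftrightarrow> u < 10 \<and> u \<noteq> v \<and> \<not> (u div 2 = v div 2 \<and> u < 6)"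
  proof (cases "u = v")
    case True then show ?thesis by simp
  next
    case False then show ?thesis unfolding m3[OF False] using v by blast
  qed
  also have "\<dots> \<longleftrightarrow> u \<in> set (R1 v)" using conjunct2[OF R1_ok[OF v]] by (rule spec)
  finally show "u \<in> nbrs K10_minus_3K2_edges v \<longleftrightarrow> u \<in> set (R1 v)" .
qed

lemma darts1: "(u, v) \<in> darts K10_minus_3K2_edges \<longleftrightarrow> v < 10 \<and> u \<in> set (R1 v)"
proof -
  have vlt: "(u, v) \<in> darts K10_minus_3K2_edges \<Longrightarrow> v < 10"
  proof -
    assume "(u, v) \<in> darts K10_minus_3K2_edges"
    then have "{u, v} \<in> K_edges 10" unfolding darts_def K10_minus_3K2_edges_def by blast
    then show "v < 10" using K_edges_mem by blast
  qed
  show ?thesis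
  proof (cases "v < 10")
    case True then show ?thesis using darts_nbrs[of u v] nbrs1[OF True] by simp
  next
    case False then show ?thesis using vlt by blast
  qed
qed

lemma rs1: "rotation_system {0..<10} K10_minus_3K2_edges (\<lambda>v. nxt (R1 v))"
proof (rule rotation_systemI)
  fix v :: nat assume "v \<in> {0..<10}"
  then have "v < 10" by simp
  then show "distinct (R1 v) \<and> nbrs K10_minus_3K2_edges v = set (R1 v)" using conjunct1[OF R1_ok[OF \<open>v < 10\<close>]] nbrs1[OF \<open>v < 10\<close>] by simp
qed

definition "s1 = face_step (\<lambda>v. nxt (R1 v))"

lemma tri1: "v < 10 \<Longrightarrow> u \<in> set (R1 v) \<Longrightarrow> s1 (s1 (s1 (u,v))) = (u,v) \<and> (u,v) \<noteq> s1 (u,v) \<and> (u,v) \<noteq> s1 (s1 (u,v)) \<and> s1 (u,v) \<noteq> s1 (s1 (u,v))"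
  apply (drule lt10)
  apply (elim disjE; simp add: R1_def; elim disjE; simp add: s1_def face_step_def nxt_def R1_def)
  done

lemma K10_tri: "has_triangular_orientable_embedding {0..<(10::nat)} K10_minus_3K2_edges"
  unfolding has_triangular_orientable_embedding_def
proof (intro exI conjI ballI)
  show "rotation_system {0..<10} K10_minus_3K2_edges (\<lambda>v. nxt (R1 v))" by (rule rs1)
next
  fix f assume "f \<in> faces K10_minus_3K2_edges (\<lambda>v. nxt (R1 v))"
  then obtain u v where d: "(u, v) \<in> darts K10_minus_3K2_edges" and f: "f = face_orbit (\<lambda>v. nxt (R1 v)) (u, v)"
    unfolding faces_def by auto
  have t: "s1 (s1 (s1 (u,v))) = (u,v) \<and> (u,v) \<noteq> s1 (u,v) \<and> (u,v) \<noteq> s1 (s1 (u,v)) \<and> s1 (u,v) \<noteq> s1 (s1 (u,v))"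
    using tri1 d darts1 by blast
  then have "f = {(u,v), s1 (u,v), s1 (s1 (u,v))}" using f orbit3 unfolding s1_def by metis
  then show "card f = 3" using t by simp
qed


definition "s2 = face_step (\<lambda>v. nxt (R2 v))"

definition TL :: "((nat \<times> nat) \<times> nat \<times> (nat \<times> nat) list) list" where
  "TL = [((0,2), 3, [(0,2), (2,6), (6,0)]),
 ((0,3), 3, [(0,3), (3,4), (4,0)]),
 ((0,4), 3, [(0,4), (4,8), (8,0)]),
 ((0,5), 3, [(0,5), (5,9), (9,0)]),
 ((0,6), 3, [(0,6), (6,5), (5,0)]),
 ((0,7), 3, [(0,7), (7,2), (2,0)]),
 ((0,8), 3, [(0,8), (8,7), (7,0)]),
 ((0,9), 3, [(0,9), (9,3), (3,0)]),
 ((1,2), 3, [(1,2), (2,4), (4,1)]),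
 ((1,3), 3, [(1,3), (3,5), (5,1)]),
 ((1,4), 3, [(1,4), (4,7), (7,1)]),
 ((1,5), 3, [(1,5), (5,6), (6,1)]),
 ((1,6), 3, [(1,6), (6,8), (8,1)]),
 ((1,7), 3, [(1,7), (7,3), (3,1)]),
 ((1,8), 4, [(1,8), (8,3), (3,9), (9,1)]),
 ((1,9), 3, [(1,9), (9,2), (2,1)]),
 ((2,5), 3, [(2,5), (5,8), (8,2)]),
 ((2,7), 3, [(2,7), (7,5), (5,2)]),
 ((2,8), 3, [(2,8), (8,4), (4,2)]),
 ((2,9), 3, [(2,9), (9,6), (6,2)]),
 ((3,6), 3, [(3,6), (6,4), (4,3)]),
 ((3,7), 4, [(3,7), (7,8), (8,6), (6,3)]),
 ((3,8), 3, [(3,8), (8,5), (5,3)]),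
 ((4,6), 3, [(4,6), (6,9), (9,4)]),
 ((4,9), 3, [(4,9), (9,7), (7,4)]),
 ((5,7), 3, [(5,7), (7,9), (9,5)])]"

lemma iterf_num: "iterf s d (numeral k) = iterf s (s d) (pred_numeral k)"
  by (simp add: numeral_eq_Suc)
lemma iterl_num: "iterl s d (numeral k) = d # iterl s (s d) (pred_numeral k)"
  by (simp add: numeral_eq_Suc)

lemma TL_ok: "\<forall>(t, n, ol) \<in> set TL. n > 0 \<and> iterf s2 t n = t \<and> iterl s2 t n = ol \<and> snd t < 10 \<and> fst t \<in> set (R2 (snd t))"
  by (simp add: TL_def s2_def face_step_def nxt_def R2_def iterf_num iterl_num)

lemma TL_sep: "\<forall>(t, n, ol) \<in> set TL. \<forall>(t', n', ol') \<in> set TL. t \<in> set ol' \<longrightarrow> t = t'"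
  by (simp add: TL_def)

lemma TL_dist: "distinct (map fst TL)" "length TL = 26"
  by (simp_all add: TL_def)


lemma O10_faces_le:
  assumes rs: "rotation_system {0..<10} O10_edges \<rho>"
  shows "card (faces O10_edges \<rho>) \<le> 26"
proof -
  have dV: "\<And>u v. (u, v) \<in> darts O10_edges \<Longrightarrow> v \<in> {0..<10}" using darts2 by simp
  have big: "card f \<ge> 3" if f: "f \<in> faces O10_edges \<rho>" for f
  proof -
    obtain d where d: "d \<in> darts O10_edges" "f = face_orbit \<rho> d" using f unfolding faces_def by blast
    show ?thesis using orbit_card3[OF rs dV darts2_fin deg2 d(1)] d(2) by simp
  qed
  have "3 * card (faces O10_edges \<rho>) \<le> card (darts O10_edges)"
    by (rule faces_count[OF rs dV darts2_fin big])
  then show ?thesis using darts2_card by linarith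
qed

lemma O10_genus_ge:
  assumes rs: "rotation_system {0..<10} O10_edges \<rho>"
  shows "emb_genus {0..<10} O10_edges \<rho> \<ge> 3"
proof -
  have F: "int (card (faces O10_edges \<rho>)) \<le> 26" using O10_faces_le[OF rs] by simp
  have "emb_genus {0..<10} O10_edges \<rho> = nat ((32 - int (card (faces O10_edges \<rho>))) div 2)"
    unfolding emb_genus_def O10_card_E by simp
  also have "\<dots> \<ge> 3"
  proof -
    have "6 \<le> 32 - int (card (faces O10_edges \<rho>))" using F by linarith
    then have "6 div 2 \<le> (32 - int (card (faces O10_edges \<rho>))) div 2" by (rule zdiv_mono1) simp
    then show ?thesis by simp
  qed
  finally show ?thesis .
qed

lemma O10_faces_ge: "card (faces O10_edges (\<lambda>v. nxt (R2 v))) \<ge> 26"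
proof -
  let ?\<rho> = "\<lambda>v. nxt (R2 v)"
  let ?T = "set (map fst TL)"
  have orb: "face_orbit ?\<rho> t = set ol" if "(t, n, ol) \<in> set TL" for t n ol
  proof -
    have "n > 0" "iterf s2 t n = t" "iterl s2 t n = ol" using TL_ok that by auto
    then show ?thesis using orbit_n[of n ?\<rho> t] unfolding s2_def by simp
  qed
  have sub: "face_orbit ?\<rho> ` ?T \<subseteq> faces O10_edges ?\<rho>"
  proof
    fix f assume "f \<in> face_orbit ?\<rho> ` ?T"
    then obtain t n ol where t: "(t, n, ol) \<in> set TL" "f = face_orbit ?\<rho> t" by auto
    have "snd t < 10 \<and> fst t \<in> set (R2 (snd t))" using TL_ok t(1) by auto
    then have "t \<in> darts O10_edges" using darts2[of "fst t" "snd t"] by simp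
    then show "f \<in> faces O10_edges ?\<rho>" unfolding faces_def using t(2) by blast
  qed
  have inj: "inj_on (face_orbit ?\<rho>) ?T"
  proof (rule inj_onI)
    fix a b assume a: "a \<in> ?T" and b: "b \<in> ?T" and eq: "face_orbit ?\<rho> a = face_orbit ?\<rho> b"
    obtain na ola where ta: "(a, na, ola) \<in> set TL" using a by auto
    obtain nb olb where tb: "(b, nb, olb) \<in> set TL" using b by auto
    have "a \<in> face_orbit ?\<rho> a" unfolding face_orbit_def by (auto intro: exI[of _ 0])
    then have "a \<in> face_orbit ?\<rho> b" using eq by simp
    then have "a \<in> set olb" using orb[OF tb] by simp
    then show "a = b" using TL_sep ta tb by fastforce
  qed
  have "card (face_orbit ?\<rho> ` ?T) = card ?T" by (rule card_image[OF inj])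
  also have "card ?T = 26" using TL_dist distinct_card by (metis length_map)
  finally have c: "card (face_orbit ?\<rho> ` ?T) = 26" .
  have "finite (faces O10_edges ?\<rho>)" unfolding faces_def using darts2_fin by simp
  then show ?thesis using card_mono[OF _ sub] c by simp
qed

lemma O10_genus: "orientable_genus {0..<(10::nat)} O10_edges = 3"
proof -
  let ?\<rho> = "\<lambda>v. nxt (R2 v)"
  have F: "card (faces O10_edges ?\<rho>) = 26" using O10_faces_ge O10_faces_le[OF rs2] by simp
  have g: "emb_genus {0..<10} O10_edges ?\<rho> = 3"
    unfolding emb_genus_def O10_card_E F by simp
  show ?thesis unfolding orientable_genus_def
  proof (rule Least_equality)
    show "\<exists>\<rho>. rotation_system {0..<10} O10_edges \<rho> \<and> emb_genus {0..<10} O10_edges \<rho> = 3"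
      using rs2 g by blast
  next
    fix y assume "\<exists>\<rho>. rotation_system {0..<10} O10_edges \<rho> \<and> emb_genus {0..<10} O10_edges \<rho> = y"
    then show "3 \<le> y" using O10_genus_ge by blast
  qed
qed

lemma ceil83: "nat \<lceil>(4 * 2 :: real) / 3\<rceil> = 3"
proof -
  have "\<lceil>(4 * 2 :: real) / 3\<rceil> = 3" by (simp add: ceiling_eq_iff)
  then show ?thesis by simp
qed


theorem mainTheorem6:
  shows "simple_graph {0..<10} K10_minus_3K2_edges
       \<and> has_triangular_orientable_embedding {0..<(10::nat)} K10_minus_3K2_edges
       \<and> simple_graph {0..<10} O10_edges
       \<and> orientable_genus {0..<(10::nat)} O10_edges = nat \<lceil>(4 * 2 :: real) / 3\<rceil>
       \<and> orientable_genus {0..<(10::nat)} O10_edges = 3"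
proof (intro conjI)
  show "simple_graph {0..<10} K10_minus_3K2_edges"
    unfolding K10_minus_3K2_edges_def by (rule simple_K)
  show "has_triangular_orientable_embedding {0..<(10::nat)} K10_minus_3K2_edges"
    by (rule K10_tri)
  show "simple_graph {0..<10} O10_edges"
    unfolding O10_edges_def by (rule simple_K)
  show "orientable_genus {0..<(10::nat)} O10_edges = nat \<lceil>(4 * 2 :: real) / 3\<rceil>"
    using O10_genus ceil83 by simp
  show "orientable_genus {0..<(10::nat)} O10_edges = 3"
    by (rule O10_genus)
qed

end
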